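(* Let $L$ be a lattice with permutable congruences. Then $\operatorname{Con}_c L$ satisfies $\mathrm{URP}_1$ (that is, it satisfies $\mathrm{URP}_1$ at every one of its elements).
   Context: $\operatorname{Con}_c L$ denotes the $\{\vee,0\}$-semilattice of compact (i.e. finitely generated) congruences of a lattice $L$. A lattice has permutable congruences if $\alpha\beta=\beta\alpha$ for all congruences $\alpha,\beta$, where $\alpha\beta=\{(x,y): \exists z,\ (x,z)\in\alpha,\ (z,y)\in\beta\}$. Let $S$ be a $\{\vee,0\}$-semilattice and $\varepsilon\in S$. $S$ satisfies $\mathrm{URP}_1$ at $\varepsilon$ if for every family $((\alpha_i,\beta_i))_{i\in I}$ of elements of $S\times S$ with $\alpha_i\vee\beta_i=\varepsilon$ for all $i$, there exist a family $((\alpha_i^*,\beta_i^* ))_{i\in I}$ in $S\times S$ and a family $(\gamma_{i,j})_{(i,j)\in I\times I}$ in $S$ such that for all $i,j,k\in I$: (i) $\alpha_i^*\leq\alpha_i$, $\beta_i^*\leq\beta_i$, $\alpha_i^*\vee\beta_i^*=\varepsilon$; (ii) $\gamma_{i,j}\leq\alpha_i^*$ and $\gamma_{i,j}\leq\beta_j^*$; (iii) $\alpha_i^*\leq\alpha_j^*\vee\gamma_{i,j}$ and $\beta_j^*\leq\beta_i^*\vee\gamma_{i,j}$; (iv) $\gamma_{i,k}\leq\gamma_{i,j}\vee\gamma_{j,k}$. *)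

theory Defs
  imports Main
begin

definition lat_cong :: "('a::lattice \<times> 'a) set \<Rightarrow> bool" where
  "lat_cong \<theta> \<longleftrightarrow> equiv UNIV \<theta> \<and>
     (\<forall>a b c d. (a, b) \<in> \<theta> \<and> (c, d) \<in> \<theta> \<longrightarrow>
        (inf a c, inf b d) \<in> \<theta> \<and> (sup a c, sup b d) \<in> \<theta>)"

definition Cg :: "('a::lattice \<times> 'a) set \<Rightarrow> ('a \<times> 'a) set" where
  "Cg H = \<Inter>{\<theta>. lat_cong \<theta> \<and> H \<subseteq> \<theta>}"

definition cong_join :: "('a::lattice \<times> 'a) set \<Rightarrow> ('a \<times> 'a) set \<Rightarrow> ('a \<times> 'a) set" where
  "cong_join \<alpha> \<beta> = Cg (\<alpha> \<union> \<beta>)"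

definition Con_c :: "('a::lattice \<times> 'a) set set" where
  "Con_c = {\<theta>. lat_cong \<theta> \<and> (\<exists>H. finite H \<and> \<theta> = Cg H)}"

definition permutable_congruences :: "'a::lattice itself \<Rightarrow> bool" where
  "permutable_congruences (TYPE('a)) \<longleftrightarrow>
     (\<forall>\<alpha> \<beta> :: ('a \<times> 'a) set. lat_cong \<alpha> \<longrightarrow> lat_cong \<beta> \<longrightarrow> \<alpha> O \<beta> = \<beta> O \<alpha>)"

definition URP1_at :: "'s set \<Rightarrow> ('s \<Rightarrow> 's \<Rightarrow> 's) \<Rightarrow> ('s \<Rightarrow> 's \<Rightarrow> bool) \<Rightarrow> 's \<Rightarrow> 'i set \<Rightarrow> bool" where
  "URP1_at S join le eps I \<longleftrightarrow>
    (\<forall>\<alpha> \<beta> :: 'i \<Rightarrow> 's.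
      (\<forall>i\<in>I. \<alpha> i \<in> S \<and> \<beta> i \<in> S \<and> join (\<alpha> i) (\<beta> i) = eps) \<longrightarrow>
      (\<exists>\<alpha>' \<beta>' :: 'i \<Rightarrow> 's. \<exists>\<gamma> :: 'i \<Rightarrow> 'i \<Rightarrow> 's.
         (\<forall>i\<in>I. \<alpha>' i \<in> S \<and> \<beta>' i \<in> S) \<and>
         (\<forall>i\<in>I. \<forall>j\<in>I. \<gamma> i j \<in> S) \<and>
         (\<forall>i\<in>I. le (\<alpha>' i) (\<alpha> i) \<and> le (\<beta>' i) (\<beta> i) \<and> join (\<alpha>' i) (\<beta>' i) = eps) \<and>
         (\<forall>i\<in>I. \<forall>j\<in>I. le (\<gamma> i j) (\<alpha>' i) \<and> le (\<gamma> i j) (\<beta>' j)) \<and>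
         (\<forall>i\<in>I. \<forall>j\<in>I. le (\<alpha>' i) (join (\<alpha>' j) (\<gamma> i j)) \<and> le (\<beta>' j) (join (\<beta>' i) (\<gamma> i j))) \<and>
         (\<forall>i\<in>I. \<forall>j\<in>I. \<forall>k\<in>I. le (\<gamma> i k) (join (\<gamma> i j) (\<gamma> j k)))))"

end

theory Submission
  imports Defs
begin

lemma lc_refl: "lat_cong \<theta> \<Longrightarrow> (x, x) \<in> \<theta>"
  unfolding lat_cong_def equiv_def refl_on_def by blast
lemma lc_sym: "lat_cong \<theta> \<Longrightarrow> (x, y) \<in> \<theta> \<Longrightarrow> (y, x) \<in> \<theta>"
  unfolding lat_cong_def equiv_def sym_def by blast
lemma lc_trans: "lat_cong \<theta> \<Longrightarrow> (x, y) \<in> \<theta> \<Longrightarrow> (y, z) \<in> \<theta> \<Longrightarrow> (x, z) \<in> \<theta>"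
  unfolding lat_cong_def equiv_def trans_def by blast
lemma lc_inf: "lat_cong \<theta> \<Longrightarrow> (a, b) \<in> \<theta> \<Longrightarrow> (c, d) \<in> \<theta> \<Longrightarrow> (inf a c, inf b d) \<in> \<theta>"
  unfolding lat_cong_def by blast
lemma lc_sup: "lat_cong \<theta> \<Longrightarrow> (a, b) \<in> \<theta> \<Longrightarrow> (c, d) \<in> \<theta> \<Longrightarrow> (sup a c, sup b d) \<in> \<theta>"
  unfolding lat_cong_def by blast

lemma lat_cong_Inter: "(\<And>\<theta>. \<theta> \<in> F \<Longrightarrow> lat_cong \<theta>) \<Longrightarrow> lat_cong (\<Inter>F)"
proof -
  assume F: "\<And>\<theta>. \<theta> \<in> F \<Longrightarrow> lat_cong \<theta>"
  show ?thesis
    unfolding lat_cong_def[of "\<Inter>F"] equiv_def refl_on_def sym_def trans_def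
  proof (intro conjI allI impI ballI)
    show "\<Inter>F \<subseteq> UNIV \<times> UNIV" by simp
    fix x show "(x, x) \<in> \<Inter>F" using F lc_refl by blast
  next
    fix x y assume "(x, y) \<in> \<Inter>F" then show "(y, x) \<in> \<Inter>F" using F lc_sym by blast
  next
    fix x y z assume "(x, y) \<in> \<Inter>F" "(y, z) \<in> \<Inter>F"
    then show "(x, z) \<in> \<Inter>F" using F lc_trans by blast
  next
    fix a b c d assume "(a, b) \<in> \<Inter>F \<and> (c, d) \<in> \<Inter>F"
    then show "(inf a c, inf b d) \<in> \<Inter>F" using F lc_inf by blast
  next
    fix a b c d assume "(a, b) \<in> \<Inter>F \<and> (c, d) \<in> \<Inter>F"
    then show "(sup a c, sup b d) \<in> \<Inter>F" using F lc_sup by blast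
  qed
qed

lemma lat_cong_Cg: "lat_cong (Cg X)"
  unfolding Cg_def by (rule lat_cong_Inter) blast

lemma Cg_sub: "X \<subseteq> Cg X"
  unfolding Cg_def by blast

lemma Cg_least: "lat_cong \<theta> \<Longrightarrow> X \<subseteq> \<theta> \<Longrightarrow> Cg X \<subseteq> \<theta>"
  unfolding Cg_def by blast

lemma Cg_Con_c: "finite X \<Longrightarrow> Cg X \<in> Con_c"
  unfolding Con_c_def using lat_cong_Cg by blast

lemma join_least: "lat_cong \<theta> \<Longrightarrow> A \<subseteq> \<theta> \<Longrightarrow> B \<subseteq> \<theta> \<Longrightarrow> cong_join A B \<subseteq> \<theta>"
  unfolding cong_join_def by (simp add: Cg_least)

lemma join_ub1: "A \<subseteq> cong_join A B"
  unfolding cong_join_def using Cg_sub by blast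
lemma join_ub2: "B \<subseteq> cong_join A B"
  unfolding cong_join_def using Cg_sub by blast

lemma infsup_iff:
  assumes "lat_cong \<theta>"
  shows "(a, b) \<in> \<theta> \<longleftrightarrow> (inf a b, sup a b) \<in> \<theta>"
proof
  assume h: "(a, b) \<in> \<theta>"
  have 1: "(inf a a, inf a b) \<in> \<theta>" using lc_inf[OF assms lc_refl[OF assms] h] .
  have 2: "(sup a a, sup a b) \<in> \<theta>" using lc_sup[OF assms lc_refl[OF assms] h] .
  have d1: "(inf a b, a) \<in> \<theta>" using 1 lc_sym[OF assms] by simp
  have d2: "(a, sup a b) \<in> \<theta>" using 2 by simp
  show "(inf a b, sup a b) \<in> \<theta>" using lc_trans[OF assms d1 d2] .
next
  assume h: "(inf a b, sup a b) \<in> \<theta>"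
  have 1: "(sup a (inf a b), sup a (sup a b)) \<in> \<theta>" using lc_sup[OF assms lc_refl[OF assms] h] .
  have 2: "(sup b (inf a b), sup b (sup a b)) \<in> \<theta>" using lc_sup[OF assms lc_refl[OF assms] h] .
  have c1: "(a, sup a b) \<in> \<theta>" using 1 by (simp add: sup_absorb1)
  have c2: "(b, sup a b) \<in> \<theta>" proof -
    have e1: "sup b (inf a b) = b" by (rule sup_absorb1) simp
    have e2: "sup b (sup a b) = sup a b" by (rule sup_absorb2) simp
    show ?thesis using 2 unfolding e1 e2 .
  qed
  show "(a, b) \<in> \<theta>" using lc_trans[OF assms c1 lc_sym[OF assms c2]] .
qed

lemma perm_comp:
  assumes "lat_cong \<alpha>" "lat_cong \<beta>" "\<alpha> O \<beta> = \<beta> O \<alpha>"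
  shows "cong_join \<alpha> \<beta> \<subseteq> \<alpha> O \<beta>"
proof (rule join_least)
  show "\<alpha> \<subseteq> \<alpha> O \<beta>"
  proof
    fix p assume "p \<in> \<alpha>" then obtain x y where "p = (x, y)" "(x, y) \<in> \<alpha>" by (cases p) auto
    then show "p \<in> \<alpha> O \<beta>" using relcompI[OF _ lc_refl[OF assms(2)]] by simp
  qed
  show "\<beta> \<subseteq> \<alpha> O \<beta>"
  proof
    fix p assume "p \<in> \<beta>" then obtain x y where "p = (x, y)" "(x, y) \<in> \<beta>" by (cases p) auto
    then show "p \<in> \<alpha> O \<beta>" using relcompI[OF lc_refl[OF assms(1)]] by simp
  qed
  show "lat_cong (\<alpha> O \<beta>)"
    unfolding lat_cong_def[of "\<alpha> O \<beta>"] equiv_def refl_on_def sym_def trans_def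
  proof (intro conjI allI impI)
    show "\<alpha> O \<beta> \<subseteq> UNIV \<times> UNIV" by simp
    show "\<forall>x\<in>UNIV. (x, x) \<in> \<alpha> O \<beta>" using lc_refl[OF assms(1)] lc_refl[OF assms(2)] by blast
  next
    fix x y assume "(x, y) \<in> \<alpha> O \<beta>"
    then have "(y, x) \<in> \<beta> O \<alpha>" using lc_sym[OF assms(1)] lc_sym[OF assms(2)] by blast
    then show "(y, x) \<in> \<alpha> O \<beta>" using assms(3) by simp
  next
    fix x y z assume "(x, y) \<in> \<alpha> O \<beta>" "(y, z) \<in> \<alpha> O \<beta>"
    then have "(x, z) \<in> \<alpha> O (\<beta> O \<alpha>) O \<beta>" by blast
    also have "\<dots> = \<alpha> O (\<alpha> O \<beta>) O \<beta>" using assms(3) by simp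
    finally obtain u v w where uvw: "(x, u) \<in> \<alpha>" "(u, v) \<in> \<alpha>" "(v, w) \<in> \<beta>" "(w, z) \<in> \<beta>" by blast
    show "(x, z) \<in> \<alpha> O \<beta>"
      using relcompI[OF lc_trans[OF assms(1) uvw(1,2)] lc_trans[OF assms(2) uvw(3,4)]] .
  next
    fix a b c d assume "(a, b) \<in> \<alpha> O \<beta> \<and> (c, d) \<in> \<alpha> O \<beta>"
    then obtain z w where zw: "(a, z) \<in> \<alpha>" "(z, b) \<in> \<beta>" "(c, w) \<in> \<alpha>" "(w, d) \<in> \<beta>" by blast
    show "(inf a c, inf b d) \<in> \<alpha> O \<beta>"
      using relcompI[OF lc_inf[OF assms(1) zw(1,3)] lc_inf[OF assms(2) zw(2,4)]] .
  next
    fix a b c d assume "(a, b) \<in> \<alpha> O \<beta> \<and> (c, d) \<in> \<alpha> O \<beta>"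
    then obtain z w where zw: "(a, z) \<in> \<alpha>" "(z, b) \<in> \<beta>" "(c, w) \<in> \<alpha>" "(w, d) \<in> \<beta>" by blast
    show "(sup a c, sup b d) \<in> \<alpha> O \<beta>"
      using relcompI[OF lc_sup[OF assms(1) zw(1,3)] lc_sup[OF assms(2) zw(2,4)]] .
  qed
qed

lemma L1: "lat_cong J \<Longrightarrow> a \<le> xi \<Longrightarrow> (a, xj) \<in> J \<Longrightarrow> (inf xi xj, xi) \<in> J \<Longrightarrow> (a, xi) \<in> J"
proof -
  assume J: "lat_cong J" and le: "a \<le> xi" and h1: "(a, xj) \<in> J" and h2: "(inf xi xj, xi) \<in> J"
  have "(inf xi a, inf xi xj) \<in> J" using lc_inf[OF J lc_refl[OF J] h1] .
  then have "(a, inf xi xj) \<in> J" using le by (simp add: inf_absorb2)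
  then show ?thesis using h2 lc_trans[OF J] by blast
qed

lemma L2: "lat_cong J \<Longrightarrow> xi \<le> b \<Longrightarrow> xj \<le> b \<Longrightarrow> (xi, b) \<in> J \<Longrightarrow> (inf xi xj, xi) \<in> J \<Longrightarrow> (xj, b) \<in> J"
proof -
  assume J: "lat_cong J" and le: "xi \<le> b" "xj \<le> b" and h1: "(xi, b) \<in> J" and h2: "(inf xi xj, xi) \<in> J"
  have "(sup xj (inf xi xj), sup xj xi) \<in> J" using lc_sup[OF J lc_refl[OF J] h2] .
  then have a: "(xj, sup xj xi) \<in> J" by (simp add: inf_commute sup_absorb1)
  have "(sup xj xi, sup xj b) \<in> J" using lc_sup[OF J lc_refl[OF J] h1] .
  then have "(sup xj xi, b) \<in> J" using le by (simp add: sup_absorb2)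
  then show ?thesis using a lc_trans[OF J] by blast
qed

lemma L3: "lat_cong J \<Longrightarrow> (inf xi xj, xi) \<in> J \<Longrightarrow> (inf xj xk, xj) \<in> J \<Longrightarrow> (inf xi xk, xi) \<in> J"
proof -
  assume J: "lat_cong J" and h1: "(inf xi xj, xi) \<in> J" and h2: "(inf xj xk, xj) \<in> J"
  have a: "(inf xi (inf xj xk), inf xi xj) \<in> J" using lc_inf[OF J lc_refl[OF J] h2] .
  have b: "(inf (inf xi xj) xk, inf xi xk) \<in> J" using lc_inf[OF J h1 lc_refl[OF J]] .
  have "inf xi (inf xj xk) = inf (inf xi xj) xk" by (simp add: inf_assoc)
  then show ?thesis using a b h1 lc_sym[OF J] lc_trans[OF J] by metis
qed

lemma L4: "lat_cong J \<Longrightarrow> a \<le> xj \<Longrightarrow> (a, xi) \<in> J \<Longrightarrow> (inf xi xj, xi) \<in> J"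
proof -
  assume J: "lat_cong J" and le: "a \<le> xj" and h: "(a, xi) \<in> J"
  have "(inf xi xj, inf a xj) \<in> J" using lc_inf[OF J lc_sym[OF J h] lc_refl[OF J]] .
  then have "(inf xi xj, a) \<in> J" using le by (simp add: inf_absorb1)
  then show ?thesis using h lc_trans[OF J] by blast
qed

lemma L5: "lat_cong J \<Longrightarrow> xi \<le> b \<Longrightarrow> (xj, b) \<in> J \<Longrightarrow> (inf xi xj, xi) \<in> J"
proof -
  assume J: "lat_cong J" and le: "xi \<le> b" and h: "(xj, b) \<in> J"
  have "(inf xi xj, inf xi b) \<in> J" using lc_inf[OF J lc_refl[OF J] h] .
  then show ?thesis using le by (simp add: inf_absorb1)
qed

theorem theorem1p5:
  fixes I :: "'i set"
  assumes "permutable_congruences TYPE('a::lattice)"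
    and "(eps :: ('a \<times> 'a) set) \<in> Con_c"
  shows "URP1_at Con_c cong_join (\<subseteq>) eps I"
proof -
  obtain H where Hf: "finite H" and epsH: "eps = Cg H"
    using assms(2) unfolding Con_c_def by blast
  have eps_lc: "lat_cong eps" using epsH lat_cong_Cg by simp
  define H' where "H' = (\<lambda>(a, b). (inf a b, sup a b)) ` H"
  have H'f: "finite H'" using Hf H'_def by simp
  have H'le: "\<And>a b. (a, b) \<in> H' \<Longrightarrow> a \<le> b" unfolding H'_def by (auto intro: order_trans[OF inf_le1 sup_ge1])
  have H'eps: "H' \<subseteq> eps" unfolding H'_def
    using Cg_sub[of H] epsH infsup_iff[OF eps_lc] by auto
  have epsH': "\<And>J. lat_cong J \<Longrightarrow> H' \<subseteq> J \<Longrightarrow> eps \<subseteq> J"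
  proof -
    fix J :: "('a \<times> 'a) set" assume J: "lat_cong J" "H' \<subseteq> J"
    have "H \<subseteq> J"
    proof
      fix p assume "p \<in> H"
      then obtain a b where p: "p = (a, b)" "(a, b) \<in> H" by (cases p) auto
      then have "(inf a b, sup a b) \<in> J" using J(2) unfolding H'_def by force
      then show "p \<in> J" using p infsup_iff[OF J(1)] by simp
    qed
    then show "eps \<subseteq> J" using epsH Cg_least J(1) by simp
  qed
  show ?thesis unfolding URP1_at_def
  proof (intro allI impI)
    fix \<alpha> \<beta> :: "'i \<Rightarrow> ('a \<times> 'a) set"
    assume A: "\<forall>i\<in>I. \<alpha> i \<in> Con_c \<and> \<beta> i \<in> Con_c \<and> cong_join (\<alpha> i) (\<beta> i) = eps"
    define P where "P i p x \<longleftrightarrow> fst p \<le> x \<and> x \<le> snd p \<and> (fst p, x) \<in> \<alpha> i \<and> (x, snd p) \<in> \<beta> i" for i p x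
    define x where "x i p = (SOME y. P i p y)" for i p
    have ex: "\<exists>y. P i p y" if i: "i \<in> I" and p: "p \<in> H'" for i p
    proof -
      obtain a b where ab: "p = (a, b)" by (cases p)
      have la: "lat_cong (\<alpha> i)" and lb: "lat_cong (\<beta> i)" using A i unfolding Con_c_def by auto
      have "(a, b) \<in> eps" using H'eps p ab by auto
      also have "eps \<subseteq> \<alpha> i O \<beta> i"
      proof -
        have "\<alpha> i O \<beta> i = \<beta> i O \<alpha> i" using assms(1) la lb unfolding permutable_congruences_def by blast
        then have "cong_join (\<alpha> i) (\<beta> i) \<subseteq> \<alpha> i O \<beta> i" using perm_comp[OF la lb] by simp
        then show ?thesis using A i by simp
      qed
      finally obtain z where z: "(a, z) \<in> \<alpha> i" "(z, b) \<in> \<beta> i" by blast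
      have ale: "a \<le> b" using H'le p ab by simp
      have 1: "(inf (sup a a) b, inf (sup z a) b) \<in> \<alpha> i"
        using lc_inf[OF la lc_sup[OF la z(1) lc_refl[OF la]] lc_refl[OF la]] .
      have 2: "(inf (sup z a) b, inf (sup b a) b) \<in> \<beta> i"
        using lc_inf[OF lb lc_sup[OF lb z(2) lc_refl[OF lb]] lc_refl[OF lb]] .
      have "P i p (inf (sup z a) b)"
        unfolding P_def ab using 1 2 ale by (simp add: inf_absorb1 inf_absorb2 le_infI1 sup_absorb1)
      then show ?thesis by blast
    qed
    have xP: "P i p (x i p)" if "i \<in> I" "p \<in> H'" for i p
      unfolding x_def using someI_ex[OF ex[OF that]] .
    define a' where "a' i = Cg ((\<lambda>p. (fst p, x i p)) ` H')" for i
    define b' where "b' i = Cg ((\<lambda>p. (x i p, snd p)) ` H')" for i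
    define g where "g i j = Cg ((\<lambda>p. (inf (x i p) (x j p), x i p)) ` H')" for i j
    have lca: "lat_cong (a' i)" "lat_cong (b' i)" "lat_cong (g i j)" for i j
      unfolding a'_def b'_def g_def by (auto simp: lat_cong_Cg)
    have ga: "g i j \<subseteq> a' i" if "i \<in> I" "j \<in> I" for i j
      unfolding g_def
    proof (rule Cg_least[OF lca(1)], safe)
      fix p assume p: "p \<in> H'"
      have h: "(fst p, x i p) \<in> a' i" unfolding a'_def by (rule subsetD[OF Cg_sub]) (use p in auto)
      have le: "fst p \<le> x j p" using xP[OF that(2) p] unfolding P_def by simp
      show "(inf (x i p) (x j p), x i p) \<in> a' i"
        using L4[OF lca(1) le h] .
    qed
    have gb: "g i j \<subseteq> b' j" if "i \<in> I" "j \<in> I" for i j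
      unfolding g_def
    proof (rule Cg_least[OF lca(2)], safe)
      fix p assume p: "p \<in> H'"
      have h: "(x j p, snd p) \<in> b' j" unfolding b'_def by (rule subsetD[OF Cg_sub]) (use p in auto)
      have le: "x i p \<le> snd p" using xP[OF that(1) p] unfolding P_def by simp
      show "(inf (x i p) (x j p), x i p) \<in> b' j"
        using L5[OF lca(2) le h] .
    qed
    have gmem: "(inf (x i p) (x j p), x i p) \<in> g i j" if "p \<in> H'" for i j p
      unfolding g_def by (rule subsetD[OF Cg_sub]) (use that in auto)
    have amem: "(fst p, x i p) \<in> a' i" if "p \<in> H'" for i p
      unfolding a'_def by (rule subsetD[OF Cg_sub]) (use that in auto)
    have bmem: "(x i p, snd p) \<in> b' i" if "p \<in> H'" for i p
      unfolding b'_def by (rule subsetD[OF Cg_sub]) (use that in auto)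
    have lcJ: "lat_cong (cong_join A B)" for A B :: "('a \<times> 'a) set"
      unfolding cong_join_def by (rule lat_cong_Cg)
    show "\<exists>\<alpha>' \<beta>' \<gamma>.
         (\<forall>i\<in>I. \<alpha>' i \<in> Con_c \<and> \<beta>' i \<in> Con_c) \<and>
         (\<forall>i\<in>I. \<forall>j\<in>I. \<gamma> i j \<in> Con_c) \<and>
         (\<forall>i\<in>I. \<alpha>' i \<subseteq> \<alpha> i \<and> \<beta>' i \<subseteq> \<beta> i \<and> cong_join (\<alpha>' i) (\<beta>' i) = eps) \<and>
         (\<forall>i\<in>I. \<forall>j\<in>I. \<gamma> i j \<subseteq> \<alpha>' i \<and> \<gamma> i j \<subseteq> \<beta>' j) \<and>
         (\<forall>i\<in>I. \<forall>j\<in>I. \<alpha>' i \<subseteq> cong_join (\<alpha>' j) (\<gamma> i j) \<and> \<beta>' j \<subseteq> cong_join (\<beta>' i) (\<gamma> i j)) \<and>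
         (\<forall>i\<in>I. \<forall>j\<in>I. \<forall>k\<in>I. \<gamma> i k \<subseteq> cong_join (\<gamma> i j) (\<gamma> j k))"
    proof -
    have R1: "a' i \<in> Con_c \<and> b' i \<in> Con_c \<and> a' i \<subseteq> \<alpha> i \<and> b' i \<subseteq> \<beta> i \<and> cong_join (a' i) (b' i) = eps" if i: "i \<in> I" for i
    proof -
      have r1a: "a' i \<in> Con_c" unfolding a'_def by (rule Cg_Con_c) (use H'f in simp)
      have r1b: "b' i \<in> Con_c" unfolding b'_def by (rule Cg_Con_c) (use H'f in simp)
      have Ai: "\<alpha> i \<in> Con_c" "\<beta> i \<in> Con_c" "cong_join (\<alpha> i) (\<beta> i) = eps" using A i by blast+
      have la: "lat_cong (\<alpha> i)" using Ai(1) unfolding Con_c_def by blast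
      have lb: "lat_cong (\<beta> i)" using Ai(2) unfolding Con_c_def by blast
      have r2: "a' i \<subseteq> \<alpha> i" unfolding a'_def
      proof (rule Cg_least[OF la], safe)
        fix p assume p: "p \<in> H'"
        show "(fst p, x i p) \<in> \<alpha> i" using xP[OF i p] unfolding P_def by simp
      qed
      have r3: "b' i \<subseteq> \<beta> i" unfolding b'_def
      proof (rule Cg_least[OF lb], safe)
        fix p assume p: "p \<in> H'"
        show "(x i p, snd p) \<in> \<beta> i" using xP[OF i p] unfolding P_def by simp
      qed
      have ae1: "\<alpha> i \<subseteq> eps" using join_ub1[of "\<alpha> i" "\<beta> i"] unfolding Ai(3) .
      have ae2: "\<beta> i \<subseteq> eps" using join_ub2[of "\<beta> i" "\<alpha> i"] unfolding Ai(3) .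
      have r4: "cong_join (a' i) (b' i) = eps"
      proof
        show "cong_join (a' i) (b' i) \<subseteq> eps"
          using join_least[OF eps_lc order_trans[OF r2 ae1] order_trans[OF r3 ae2]] .
        show "eps \<subseteq> cong_join (a' i) (b' i)"
        proof (rule epsH'[OF lcJ], safe)
          fix a b assume p: "(a, b) \<in> H'"
          have h1: "(a, x i (a, b)) \<in> cong_join (a' i) (b' i)" using amem[OF p] join_ub1[of "a' i" "b' i"] by (simp add: subset_iff)
          have h2: "(x i (a, b), b) \<in> cong_join (a' i) (b' i)" using bmem[OF p] join_ub2[of "b' i" "a' i"] by (simp add: subset_iff)
          show "(a, b) \<in> cong_join (a' i) (b' i)" using lc_trans[OF lcJ h1 h2] .
        qed
      qed
      show ?thesis using r1a r1b r2 r3 r4 by simp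
    qed
    have R2: "g i j \<in> Con_c \<and> g i j \<subseteq> a' i \<and> g i j \<subseteq> b' j \<and> a' i \<subseteq> cong_join (a' j) (g i j) \<and> b' j \<subseteq> cong_join (b' i) (g i j)"
      if i: "i \<in> I" and j: "j \<in> I" for i j
    proof -
      have r1: "g i j \<in> Con_c" unfolding g_def using H'f by (auto intro: Cg_Con_c)
      have r2: "g i j \<subseteq> a' i" using ga i j .
      have r3: "g i j \<subseteq> b' j" using gb i j .
      have r4: "a' i \<subseteq> cong_join (a' j) (g i j)" unfolding a'_def[of i]
      proof (rule Cg_least[OF lcJ], safe)
        fix p assume p: "p \<in> H'"
        have h1: "(fst p, x j p) \<in> cong_join (a' j) (g i j)" using amem[OF p] join_ub1[of "a' j" "g i j"] by (simp add: subset_iff)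
        have h2: "(inf (x i p) (x j p), x i p) \<in> cong_join (a' j) (g i j)" using gmem[OF p] join_ub2[of "g i j" "a' j"] by (simp add: subset_iff)
        have le: "fst p \<le> x i p" using xP[OF i p] unfolding P_def by simp
        show "(fst p, x i p) \<in> cong_join (a' j) (g i j)" using L1[OF lcJ le h1 h2] .
      qed
      have r5: "b' j \<subseteq> cong_join (b' i) (g i j)" unfolding b'_def[of j]
      proof (rule Cg_least[OF lcJ], safe)
        fix p assume p: "p \<in> H'"
        have h1: "(x i p, snd p) \<in> cong_join (b' i) (g i j)" using bmem[OF p] join_ub1[of "b' i" "g i j"] by (simp add: subset_iff)
        have h2: "(inf (x i p) (x j p), x i p) \<in> cong_join (b' i) (g i j)" using gmem[OF p] join_ub2[of "g i j" "b' i"] by (simp add: subset_iff)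
        have le1: "x i p \<le> snd p" using xP[OF i p] unfolding P_def by simp
        have le2: "x j p \<le> snd p" using xP[OF j p] unfolding P_def by simp
        show "(x j p, snd p) \<in> cong_join (b' i) (g i j)" using L2[OF lcJ le1 le2 h1 h2] .
      qed
      show ?thesis using r1 r2 r3 r4 r5 by simp
    qed
    have R3: "g i k \<subseteq> cong_join (g i j) (g j k)" for i j k
    proof -
      show "g i k \<subseteq> cong_join (g i j) (g j k)" unfolding g_def[of i k]
      proof (rule Cg_least[OF lcJ], safe)
        fix p assume p: "p \<in> H'"
        have h1: "(inf (x i p) (x j p), x i p) \<in> cong_join (g i j) (g j k)" using gmem[OF p] join_ub1[of "g i j" "g j k"] by (simp add: subset_iff)
        have h2: "(inf (x j p) (x k p), x j p) \<in> cong_join (g i j) (g j k)" using gmem[OF p] join_ub2[of "g j k" "g i j"] by (simp add: subset_iff)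
        show "(inf (x i p) (x k p), x i p) \<in> cong_join (g i j) (g j k)" using L3[OF lcJ h1 h2] .
      qed
    qed
    show ?thesis
      apply (rule exI[of _ a'], rule exI[of _ b'], rule exI[of _ g])
      apply (intro conjI ballI)
      apply (simp_all add: R1 R2 R3)
      done
    qed
  qed
qed

end
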